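(* For every pair of integers $h,n\geq 2$, the trivial subgroup $\{(id,id)\}$ of $S_h\times S_n$ is an anonymity group, a neutrality group and a symmetry group with respect to $(h,n)$.
   Context: Permutations compose as $(\sigma\tau)(x)=\sigma(\tau(x))$. Let $G=S_h\times S_n$ and $\mathcal{P}=(S_n)^h$ (preference profiles), with $G$ acting by $(p^{(\varphi,\psi)})_i=\psi\,p_{\varphi^{-1}(i)}$. A social preference function (SPF) is any $F:\mathcal{P}\to S_n$. Its symmetry group is $G(F)=\{(\varphi,\psi)\in G: F(p^{(\varphi,\psi)})=\psi F(p)\ \forall p\}$, its anonymity group is $G_1(F)=G(F)\cap(S_h\times\{id\})$ and its neutrality group is $G_2(F)=G(F)\cap(\{id\}\times S_n)$. A subgroup $U$ is a symmetry (resp. anonymity, neutrality) group with respect to $(h,n)$ if $U=G(F)$ (resp. $U=G_1(F)$, $U=G_2(F)$) for some SPF $F$. *)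

theory Defs
  imports "HOL-Combinatorics.Permutations"
begin

text \<open>Voters are 0..<h, alternatives are 0..<n.\<close>

definition Sym :: "nat \<Rightarrow> (nat \<Rightarrow> nat) set" where
  "Sym k = {\<sigma>. \<sigma> permutes {..<k}}"

text \<open>Preference profiles (S_n)^h, represented extensionally (identity outside voters).\<close>
definition profiles :: "nat \<Rightarrow> nat \<Rightarrow> (nat \<Rightarrow> nat \<Rightarrow> nat) set" where
  "profiles h n = {p. (\<forall>i<h. p i \<in> Sym n) \<and> (\<forall>i\<ge>h. p i = id)}"

definition act :: "nat \<Rightarrow> (nat \<Rightarrow> nat) \<Rightarrow> (nat \<Rightarrow> nat) \<Rightarrow> (nat \<Rightarrow> nat \<Rightarrow> nat) \<Rightarrow> (nat \<Rightarrow> nat \<Rightarrow> nat)" where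
  "act h \<phi> \<psi> p = (\<lambda>i. if i < h then \<psi> \<circ> p (inv \<phi> i) else id)"

definition is_SPF :: "nat \<Rightarrow> nat \<Rightarrow> ((nat \<Rightarrow> nat \<Rightarrow> nat) \<Rightarrow> (nat \<Rightarrow> nat)) \<Rightarrow> bool" where
  "is_SPF h n F \<longleftrightarrow> (\<forall>p\<in>profiles h n. F p \<in> Sym n)"

definition symgroup :: "nat \<Rightarrow> nat \<Rightarrow> ((nat \<Rightarrow> nat \<Rightarrow> nat) \<Rightarrow> (nat \<Rightarrow> nat)) \<Rightarrow> ((nat \<Rightarrow> nat) \<times> (nat \<Rightarrow> nat)) set" where
  "symgroup h n F = {(\<phi>, \<psi>). \<phi> \<in> Sym h \<and> \<psi> \<in> Sym n \<and>
      (\<forall>p\<in>profiles h n. F (act h \<phi> \<psi> p) = \<psi> \<circ> F p)}"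

definition anongroup :: "nat \<Rightarrow> nat \<Rightarrow> ((nat \<Rightarrow> nat \<Rightarrow> nat) \<Rightarrow> (nat \<Rightarrow> nat)) \<Rightarrow> ((nat \<Rightarrow> nat) \<times> (nat \<Rightarrow> nat)) set" where
  "anongroup h n F = symgroup h n F \<inter> (Sym h \<times> {id})"

definition neutgroup :: "nat \<Rightarrow> nat \<Rightarrow> ((nat \<Rightarrow> nat \<Rightarrow> nat) \<Rightarrow> (nat \<Rightarrow> nat)) \<Rightarrow> ((nat \<Rightarrow> nat) \<times> (nat \<Rightarrow> nat)) set" where
  "neutgroup h n F = symgroup h n F \<inter> ({id} \<times> Sym n)"

definition is_symmetry_group :: "nat \<Rightarrow> nat \<Rightarrow> ((nat \<Rightarrow> nat) \<times> (nat \<Rightarrow> nat)) set \<Rightarrow> bool" where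
  "is_symmetry_group h n U \<longleftrightarrow> (\<exists>F. is_SPF h n F \<and> U = symgroup h n F)"

definition is_anonymity_group :: "nat \<Rightarrow> nat \<Rightarrow> ((nat \<Rightarrow> nat) \<times> (nat \<Rightarrow> nat)) set \<Rightarrow> bool" where
  "is_anonymity_group h n U \<longleftrightarrow> (\<exists>F. is_SPF h n F \<and> U = anongroup h n F)"

definition is_neutrality_group :: "nat \<Rightarrow> nat \<Rightarrow> ((nat \<Rightarrow> nat) \<times> (nat \<Rightarrow> nat)) set \<Rightarrow> bool" where
  "is_neutrality_group h n U \<longleftrightarrow> (\<exists>F. is_SPF h n F \<and> U = neutgroup h n F)"

end

theory Submission
  imports Defs
begin

definition tau :: "nat \<Rightarrow> nat" where "tau = transpose 0 1"

definition qp :: "nat \<Rightarrow> nat \<Rightarrow> nat \<Rightarrow> nat \<Rightarrow> nat" where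
  "qp h k = (\<lambda>i. if i < h then (if i < k then tau else id) else id)"

definition FF :: "nat \<Rightarrow> (nat \<Rightarrow> nat \<Rightarrow> nat) \<Rightarrow> nat \<Rightarrow> nat" where
  "FF h p = (if \<exists>k. 0 < k \<and> k < h \<and> p = qp h k then tau else id)"

lemma tau_ne: "tau \<noteq> id"
proof
  assume "tau = id"
  then have "tau 0 = 0" by simp
  then show False unfolding tau_def by simp
qed

lemma tau_Sym: "n \<ge> 2 \<Longrightarrow> tau \<in> Sym n"
  unfolding Sym_def tau_def by (auto intro!: permutes_swap_id)

lemma id_Sym: "id \<in> Sym n"
  unfolding Sym_def by simp

lemma FF_SPF: "n \<ge> 2 \<Longrightarrow> is_SPF h n (FF h)"
  unfolding is_SPF_def FF_def using tau_Sym id_Sym by auto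

lemma id_in: "(id, id) \<in> symgroup h n (FF h)"
proof -
  have "act h id id p = p" if "p \<in> profiles h n" for p
    using that unfolding act_def profiles_def by (auto simp: inv_id)
  then show ?thesis unfolding symgroup_def using id_Sym by auto
qed

lemma only_id:
  assumes h: "h \<ge> 2" and nn: "n \<ge> 2" and "(\<phi>, \<psi>) \<in> symgroup h n (FF h)"
  shows "\<phi> = id \<and> \<psi> = id"
proof -
  have phi: "\<phi> permutes {..<h}" and psi: "\<psi> \<in> Sym n"
    and eq: "\<And>p. p \<in> profiles h n \<Longrightarrow> FF h (act h \<phi> \<psi> p) = \<psi> \<circ> FF h p"
    using assms(3) unfolding symgroup_def Sym_def by auto
  define P0 :: "nat \<Rightarrow> nat \<Rightarrow> nat" where "P0 = (\<lambda>i. id)"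
  have P0p: "P0 \<in> profiles h n" unfolding P0_def profiles_def using id_Sym by auto
  have "FF h P0 = id"
  proof -
    have "P0 \<noteq> qp h k" if "0 < k" "k < h" for k
    proof
      assume "P0 = qp h k"
      then have "P0 0 = qp h k 0" by simp
      then show False using that tau_ne unfolding P0_def qp_def by simp
    qed
    then show ?thesis unfolding FF_def by auto
  qed
  moreover have actP0: "act h \<phi> \<psi> P0 = (\<lambda>i. if i < h then \<psi> else id)"
    unfolding act_def P0_def by auto
  moreover have "FF h (\<lambda>i. if i < h then \<psi> else id) = id"
  proof -
    have "(\<lambda>i. if i < h then \<psi> else id) \<noteq> qp h k" if "0 < k" "k < h" for k
    proof
      assume a: "(\<lambda>i. if i < h then \<psi> else id) = qp h k"
      have "\<psi> = tau" using fun_cong[OF a, of 0] that unfolding qp_def by simp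
      moreover have "\<psi> = id" using fun_cong[OF a, of "h - 1"] that h unfolding qp_def by (simp split: if_splits)
      ultimately show False using tau_ne by simp
    qed
    then show ?thesis unfolding FF_def by auto
  qed
  ultimately have psiid: "\<psi> = id" using eq[OF P0p] by simp
  have img: "\<phi> ` {..<k} = {..<k}" if k: "0 < k" "k < h" for k
  proof -
    have qp: "qp h k \<in> profiles h n"
      unfolding profiles_def qp_def using id_Sym tau_Sym assms by auto
    have "FF h (qp h k) = tau" unfolding FF_def using k by auto
    then have "FF h (act h \<phi> id (qp h k)) = tau" using eq[OF qp] psiid by simp
    then obtain m where m: "0 < m" "m < h" "act h \<phi> id (qp h k) = qp h m"
      unfolding FF_def using tau_ne by (auto split: if_splits)
    have key: "j < k \<longleftrightarrow> \<phi> j < m" if j: "j < h" for j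
    proof -
      have pj: "\<phi> j < h" using permutes_in_image[OF phi] j by simp
      have "act h \<phi> id (qp h k) (\<phi> j) = qp h m (\<phi> j)" using m(3) by simp
      then have "qp h k j = qp h m (\<phi> j)"
        unfolding act_def using pj permutes_inverses[OF phi] by simp
      then show ?thesis unfolding qp_def using j pj tau_ne by (auto split: if_splits)
    qed
    have "\<phi> ` {..<k} = {..<m}"
    proof
      show "\<phi> ` {..<k} \<subseteq> {..<m}" using key k(2) by (meson image_subsetI lessThan_iff order.strict_trans)
      show "{..<m} \<subseteq> \<phi> ` {..<k}"
      proof
        fix x assume x: "x \<in> {..<m}"
        then have xh: "x < h" using m by simp
        have ix: "inv \<phi> x < h" using permutes_in_image[OF permutes_inv[OF phi]] xh by simp
        have "\<phi> (inv \<phi> x) = x" using permutes_inverses[OF phi] by simp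
        then have "inv \<phi> x < k" using key[OF ix] x by simp
        then show "x \<in> \<phi> ` {..<k}" using \<open>\<phi> (inv \<phi> x) = x\<close> by (metis image_eqI lessThan_iff)
      qed
    qed
    moreover have "card (\<phi> ` {..<k}) = k"
      using card_image[OF inj_on_subset[OF permutes_inj[OF phi]]] by simp
    ultimately show ?thesis by simp
  qed
  have img2: "\<phi> ` {..<k} = {..<k}" if "k \<le> h" for k
  proof (cases "k = 0")
    case True then show ?thesis by simp
  next
    case False
    show ?thesis
    proof (cases "k = h")
      case True then show ?thesis using permutes_image[OF phi] by simp
    next
      case False
      then show ?thesis using img \<open>k \<noteq> 0\<close> that by simp
    qed
  qed
  have "\<phi> i = i" for i
  proof (cases "i < h")
    case True
    have a: "\<phi> i < Suc i" using img2[of "Suc i"] True by auto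
    have "\<phi> i \<notin> \<phi> ` {..<i}"
    proof
      assume "\<phi> i \<in> \<phi> ` {..<i}"
      then obtain j where "j < i" "\<phi> j = \<phi> i" by auto
      then show False using permutes_inj[OF phi] by (metis injD less_irrefl)
    qed
    then have "\<not> \<phi> i < i" using img2[of i] True by auto
    then show ?thesis using a by simp
  next
    case False
    then show ?thesis using permutes_not_in[OF phi] by simp
  qed
  then show ?thesis using psiid by auto
qed

lemma sym_triv: assumes "h \<ge> 2" "n \<ge> 2" shows "symgroup h n (FF h) = {(id, id)}"
  proof
  show "symgroup h n (FF h) \<subseteq> {(id, id)}" using only_id[OF assms] by fastforce
  show "{(id, id)} \<subseteq> symgroup h n (FF h)" using id_in by simp
qed

theorem mainTheorem7:
  fixes h n :: nat
  assumes "h \<ge> 2" and "n \<ge> 2"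
  shows "is_anonymity_group h n {(id, id)} \<and> is_neutrality_group h n {(id, id)}
         \<and> is_symmetry_group h n {(id, id)}"
proof -
  have s: "symgroup h n (FF h) = {(id, id)}" using sym_triv assms by simp
  have sp: "is_SPF h n (FF h)" using FF_SPF assms by simp
  have "anongroup h n (FF h) = {(id, id)}" unfolding anongroup_def s using id_Sym by auto
  moreover have "neutgroup h n (FF h) = {(id, id)}" unfolding neutgroup_def s using id_Sym by auto
  ultimately show ?thesis unfolding is_anonymity_group_def is_neutrality_group_def
      is_symmetry_group_def using s sp by metis
qed

end
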